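(* Suppose Assumptions 1 and 2 hold. Then, uniformly over all $i,j\in[n]$, $$\left|\frac{\sigma^\star_i\sigma^\star_j}{\hat\sigma_i\hat\sigma_j}-1\right|=O_P\!\left(\frac{\log n}{\gamma}+\sqrt{\frac{\log n}{T\gamma}}\right).$$
   Context: Setup. Let $n,T$ be positive integers and $\mathbf Z^\star\in\mathbb R^{n\times T}$ a deterministic real matrix whose $i$-th row $\mathbf Z^\star_i\in\mathbb R^T$ is the $i$-th (true) time series. The observed data are $\mathbf Z=\mathbf Z^\star+\mathbf N$, where $\mathbf N\in\mathbb R^{n\times T}$ is random noise with rows $\mathbf N_1,\dots,\mathbf N_n$. Let $\mathbf M=\mathbf I-\frac1T\mathbf J\in\mathbb R^{T\times T}$ be the centering projection ($\mathbf J$ the all-ones matrix). Define the signal powers $\sigma^{\star2}_i=\frac1T\|\mathbf M\mathbf Z^\star_i\|^2$, assumed positive for all $i$, and their noisy versions $\hat\sigma_i^2=\frac1T\|\mathbf M\mathbf Z_i\|^2$; $\sigma^\star_i,\hat\sigma_i$ are the nonnegative square roots. Let $\boldsymbol\Sigma^\star=\operatorname{diag}(\sigma^{\star2}_1,\dots,\sigma^{\star2}_n)$ and $\mathbf R^\star=\frac1T(\boldsymbol\Sigma^\star)^{-1/2}\mathbf Z^\star\mathbf M\mathbf Z^{\star\top}(\boldsymbol\Sigma^\star)^{-1/2}$, which is positive semidefinite of rank $d$ with nonzero eigenvalues $\lambda^\star_1\ge\dots\ge\lambda^\star_d>0$; $\kappa=\lambda^\star_1/\lambda^\star_d$. Assumption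 1: the rows $\mathbf N_1,\dots,\mathbf N_n$ are mean zero and independent, $n=O(T)$, and each $\mathbf N_i$ is a $\nu_i$-subgaussian random vector (for every fixed unit vector $\mathbf u\in\mathbb R^T$, $\mathbf u^\top\mathbf N_i$ is $\nu_i$-subgaussian). Define $\gamma=\min_{i\in[n]}\sigma^{\star2}_i/\nu_i$. Assumption 2: $\lambda^\star_d$ is bounded away from zero, $\kappa=o(T)$, and $\kappa\log T/\gamma=o(1)$. Conventions: asymptotics are as $n,T\to\infty$; $O_P$ is the usual stochastic order symbol. *)

theory Defs
  imports "HOL-Probability.Probability" "Jordan_Normal_Form.Char_Poly" "HOL-Library.Landau_Symbols"
begin

definition centering :: "nat \<Rightarrow> nat \<Rightarrow> nat \<Rightarrow> real" where
  "centering T t s = (if t = s then 1 else 0) - 1 / real T"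

definition centered :: "nat \<Rightarrow> (nat \<Rightarrow> real) \<Rightarrow> nat \<Rightarrow> real" where
  "centered T x t = (\<Sum>s<T. centering T t s * x s)"

definition sig_power :: "nat \<Rightarrow> (nat \<Rightarrow> real) \<Rightarrow> real" where
  "sig_power T x = (1 / real T) * (\<Sum>t<T. (centered T x t)^2)"

text \<open>R* = (1/T) Sigma^(-1/2) Z M Z^T Sigma^(-1/2), for Z given by rows Z i.\<close>
definition corr_mat :: "nat \<Rightarrow> nat \<Rightarrow> (nat \<Rightarrow> nat \<Rightarrow> real) \<Rightarrow> real mat" where
  "corr_mat n T Z = mat n n (\<lambda>(i, j).
      (1 / real T) * (\<Sum>t<T. \<Sum>s<T. Z i t * centering T t s * Z j s)
      / (sqrt (sig_power T (Z i)) * sqrt (sig_power T (Z j))))"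

definition lam_max :: "real mat \<Rightarrow> real" where
  "lam_max A = Max {k. eigenvalue A k}"

definition lam_min_nz :: "real mat \<Rightarrow> real" where
  "lam_min_nz A = Min {k. eigenvalue A k \<and> k \<noteq> 0}"

definition cond_number :: "real mat \<Rightarrow> real" where
  "cond_number A = lam_max A / lam_min_nz A"

definition subgaussian :: "'a measure \<Rightarrow> ('a \<Rightarrow> real) \<Rightarrow> real \<Rightarrow> bool" where
  "subgaussian M X nu \<longleftrightarrow> X \<in> borel_measurable M \<and>
     (\<forall>s::real. integrable M (\<lambda>\<omega>. exp (s * X \<omega>)) \<and>
        (\<integral>\<omega>. exp (s * X \<omega>) \<partial>M) \<le> exp (nu * s^2 / 2))"

definition subgaussian_vec :: "'a measure \<Rightarrow> nat \<Rightarrow> ('a \<Rightarrow> nat \<Rightarrow> real) \<Rightarrow> real \<Rightarrow> bool" where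
  "subgaussian_vec M T X nu \<longleftrightarrow>
     (\<forall>u::nat \<Rightarrow> real. (\<Sum>t<T. (u t)^2) = 1 \<longrightarrow>
        subgaussian M (\<lambda>\<omega>. \<Sum>t<T. u t * X \<omega> t) nu)"

definition snr_gamma :: "nat \<Rightarrow> nat \<Rightarrow> (nat \<Rightarrow> nat \<Rightarrow> real) \<Rightarrow> (nat \<Rightarrow> real) \<Rightarrow> real" where
  "snr_gamma n T Z nu = Min ((\<lambda>i. sig_power T (Z i) / nu i) ` {..<n})"

end

theory Submission
  imports Defs "Jordan_Normal_Form.Schur_Decomposition"
begin


lemma centered_eq:
  assumes "t < T"
  shows "centered T x t = x t - (\<Sum>s<T. x s) / real T"
proof -
  have e: "\<And>s. centering T t s * x s = (if t = s then x s else 0) - x s / real T"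
    by (simp add: centering_def algebra_simps)
  have "centered T x t = (\<Sum>s<T. (if t = s then x s else 0)) - (\<Sum>s<T. x s / real T)"
    unfolding centered_def e by (simp add: sum_subtractf)
  also have "\<dots> = x t - (\<Sum>s<T. x s) / real T"
    using assms by (simp add: sum_divide_distrib)
  finally show ?thesis .
qed

lemma sum_centered:
  assumes "T > 0"
  shows "(\<Sum>t<T. centered T x t) = 0"
proof -
  have "(\<Sum>t<T. centered T x t) = (\<Sum>t<T. x t - (\<Sum>s<T. x s) / real T)"
    by (rule sum.cong) (auto simp: centered_eq)
  also have "\<dots> = 0" using assms by (simp add: sum_subtractf)
  finally show ?thesis .
qed

lemma centered_add:
  "centered T (\<lambda>t. x t + y t) t = centered T x t + centered T y t"
  unfolding centered_def by (simp add: algebra_simps sum.distrib)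

lemma sig_power_add:
  "sig_power T (\<lambda>t. x t + y t) = sig_power T x
     + (2 / real T) * (\<Sum>t<T. centered T x t * centered T y t)
     + (1 / real T) * (\<Sum>t<T. (centered T y t)^2)"
  unfolding sig_power_def centered_add
  by (simp add: power2_eq_square algebra_simps sum.distrib sum_distrib_left)

lemma cross_eq:
  assumes "T > 0"
  shows "(\<Sum>t<T. centered T x t * centered T y t) = (\<Sum>t<T. centered T x t * y t)"
proof -
  have "(\<Sum>t<T. centered T x t * centered T y t)
      = (\<Sum>t<T. centered T x t * y t - centered T x t * ((\<Sum>s<T. y s) / real T))"
    by (rule sum.cong) (auto simp: centered_eq[of _ T y] algebra_simps)
  also have "\<dots> = (\<Sum>t<T. centered T x t * y t) - (\<Sum>t<T. centered T x t) * ((\<Sum>s<T. y s) / real T)"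
    by (simp add: sum_subtractf sum_distrib_right sum_divide_distrib)
  finally show ?thesis using sum_centered[OF assms] by simp
qed

lemma sq_le:
  assumes "T > 0"
  shows "(\<Sum>t<T. (centered T y t)^2) \<le> (\<Sum>t<T. (y t)^2)"
proof -
  define m where "m = (\<Sum>s<T. y s) / real T"
  have S: "(\<Sum>s<T. y s) = real T * m" using assms by (simp add: m_def)
  have "(\<Sum>t<T. (centered T y t)^2) = (\<Sum>t<T. (y t)^2 - 2 * m * y t + m^2)"
    by (rule sum.cong) (auto simp: centered_eq m_def power2_eq_square algebra_simps)
  also have "\<dots> = (\<Sum>t<T. (y t)^2) - 2 * m * (\<Sum>t<T. y t) + real T * m^2"
    by (simp add: sum.distrib sum_subtractf sum_distrib_left)
  also have "\<dots> = (\<Sum>t<T. (y t)^2) - real T * m^2"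
    unfolding S by (simp add: power2_eq_square)
  also have "\<dots> \<le> (\<Sum>t<T. (y t)^2)" by simp
  finally show ?thesis .
qed



lemma subg_tail:
  assumes P: "prob_space M" and sg: "subgaussian M X nu" and nu: "nu > 0" and x: "x > 0"
  shows "measure M {\<omega>\<in>space M. x < \<bar>X \<omega>\<bar>} \<le> 2 * exp (-(x^2)/(2*nu))"
proof -
  interpret prob_space M by fact
  define s where "s = x / nu"
  have s: "s > 0" using nu x by (simp add: s_def)
  have Xm[measurable]: "X \<in> borel_measurable M" using sg by (simp add: subgaussian_def)
  have i1: "integrable M (\<lambda>\<omega>. exp (s * X \<omega>))" and e1: "(\<integral>\<omega>. exp (s * X \<omega>) \<partial>M) \<le> exp (nu * s^2 / 2)"
    using sg by (auto simp: subgaussian_def)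
  have i2: "integrable M (\<lambda>\<omega>. exp ((-s) * X \<omega>))" and e2: "(\<integral>\<omega>. exp ((-s) * X \<omega>) \<partial>M) \<le> exp (nu * (-s)^2 / 2)"
    using sg unfolding subgaussian_def by blast+
  define g where "g = (\<lambda>\<omega>. exp (s * X \<omega>) + exp ((-s) * X \<omega>))"
  have ig: "integrable M g" unfolding g_def using i1 i2 by simp
  have Eg: "(\<integral>\<omega>. g \<omega> \<partial>M) \<le> 2 * exp (nu * s^2 / 2)"
    unfolding g_def using i1 i2 e1 e2 by (simp add: Bochner_Integration.integral_add)
  have sub: "{\<omega>\<in>space M. x < \<bar>X \<omega>\<bar>} \<subseteq> {\<omega>\<in>space M. exp (s * x) \<le> g \<omega>}"
  proof safe
    fix \<omega> assume "\<omega> \<in> space M" "x < \<bar>X \<omega>\<bar>"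
    then consider "x < X \<omega>" | "x < - X \<omega>" by linarith
    then show "exp (s * x) \<le> g \<omega>"
    proof cases
      case 1
      then have "exp (s * x) \<le> exp (s * X \<omega>)" using s by simp
      then show ?thesis unfolding g_def by (smt (verit) exp_gt_zero)
    next
      case 2
      then have "s * x \<le> s * (- X \<omega>)" using s by (intro mult_left_mono) auto
      then have "exp (s * x) \<le> exp ((-s) * X \<omega>)" by simp
      then show ?thesis unfolding g_def by (smt (verit) exp_gt_zero)
    qed
  qed
  have "measure M {\<omega>\<in>space M. x < \<bar>X \<omega>\<bar>} \<le> measure M {\<omega>\<in>space M. exp (s * x) \<le> g \<omega>}"
    by (rule finite_measure_mono[OF sub]) (simp add: g_def)
  also have "\<dots> \<le> (\<integral>\<omega>. g \<omega> \<partial>M) / exp (s * x)"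
    by (rule integral_Markov_inequality_measure[OF ig, of "space M"]) (auto simp: g_def intro: add_nonneg_nonneg)
  also have "\<dots> \<le> 2 * exp (nu * s^2 / 2) / exp (s * x)"
    by (rule divide_right_mono[OF Eg]) simp
  also have "\<dots> = 2 * exp (nu * s^2 / 2 - s * x)" by (simp add: exp_diff)
  also have "nu * s^2 / 2 - s * x = -(x^2)/(2*nu)"
    using nu by (simp add: s_def power2_eq_square field_simps)
  finally show ?thesis .
qed



lemma pow_fact_le_exp:
  fixes y :: real assumes y: "y \<ge> 0"
  shows "y^m / fact m \<le> exp y"
proof -
  have "y^m / fact m \<le> (\<Sum>k<Suc m. y^k / fact k)"
    using y by (simp add: sum_nonneg)
  also have "\<dots> \<le> (\<Sum>k. y^k / fact k)"
    by (rule sum_le_suminf) (use summable_exp_generic[of y] y in \<open>auto simp: divide_inverse mult.commute\<close>)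
  also have "\<dots> = exp y" by (simp add: exp_def divide_inverse mult.commute)
  finally show ?thesis .
qed

lemma pow_even_le_exp:
  fixes y :: real
  shows "y^(2*p) \<le> fact (2*p) * (exp y + exp (- y))"
proof -
  have "\<bar>y\<bar>^(2*p) / fact (2*p) \<le> exp \<bar>y\<bar>" by (rule pow_fact_le_exp) simp
  also have "\<dots> \<le> exp y + exp (-y)" by (cases "y \<ge> 0") auto
  finally have "\<bar>y\<bar>^(2*p) \<le> fact (2*p) * (exp y + exp (- y))"
    by (simp add: divide_le_eq mult.commute)
  moreover have "\<bar>y\<bar>^(2*p) = y^(2*p)" by (simp add: power_mult power2_abs)
  ultimately show ?thesis by simp
qed

lemma convex_pow_nonneg: "convex_on {0::real..} (\<lambda>x. x ^ p)"
proof (cases "even p")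
  case True
  then have "convex_on UNIV (\<lambda>x::real. x ^ p)" by (rule convex_power_even)
  then show ?thesis by (rule convex_on_subset) (auto simp: convex_real_interval)
next
  case False
  then show ?thesis using convex_power_odd[of p] by simp
qed

lemma avg_pow_le:
  fixes y :: "nat \<Rightarrow> real"
  assumes "T > 0" "\<And>t. t < T \<Longrightarrow> y t \<ge> 0"
  shows "((\<Sum>t<T. y t) / real T)^p \<le> (\<Sum>t<T. (y t)^p) / real T"
proof -
  have "(\<Sum>t<T. (1 / real T) *\<^sub>R y t)^p \<le> (\<Sum>t<T. (1 / real T) * (y t)^p)"
    using convex_on_sum[OF _ _ convex_pow_nonneg, of "{..<T}" "\<lambda>_. 1 / real T" y p] assms
    by auto
  then show ?thesis by (simp add: sum_divide_distrib[symmetric] sum_distrib_left[symmetric])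
qed

lemma avg_tail:
  assumes P: "prob_space M" and T: "T > 0"
    and sg: "\<And>t. t < T \<Longrightarrow> subgaussian M (\<lambda>\<omega>. N \<omega> t) nu"
    and nu: "nu > 0" and p: "p \<ge> 1" and x: "x > 0"
  shows "measure M {\<omega>\<in>space M. x < (\<Sum>t<T. (N \<omega> t)^2) / real T}
           \<le> 2 * (2 * exp 1 * real p * nu / x)^p"
proof -
  interpret prob_space M by fact
  define s where "s = sqrt (2 * real p / nu)"
  have s: "s > 0" using nu p by (simp add: s_def)
  have s2: "s^2 = 2 * real p / nu" using nu p by (simp add: s_def)
  have Nm[measurable]: "\<And>t. t < T \<Longrightarrow> (\<lambda>\<omega>. N \<omega> t) \<in> borel_measurable M"
    using sg by (simp add: subgaussian_def)
  have i1: "\<And>t. t < T \<Longrightarrow> integrable M (\<lambda>\<omega>. exp (s * N \<omega> t))"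
    and e1: "\<And>t. t < T \<Longrightarrow> (\<integral>\<omega>. exp (s * N \<omega> t) \<partial>M) \<le> exp (nu * s^2 / 2)"
    using sg by (auto simp: subgaussian_def)
  have i2: "\<And>t. t < T \<Longrightarrow> integrable M (\<lambda>\<omega>. exp ((-s) * N \<omega> t))"
    and e2: "\<And>t. t < T \<Longrightarrow> (\<integral>\<omega>. exp ((-s) * N \<omega> t) \<partial>M) \<le> exp (nu * (-s)^2 / 2)"
    using sg unfolding subgaussian_def by blast+
  define h where "h = (\<lambda>\<omega> t. exp (s * N \<omega> t) + exp ((-s) * N \<omega> t))"
  define g where "g = (\<lambda>\<omega>. (\<Sum>t<T. h \<omega> t) / real T)"
  have ih: "\<And>t. t < T \<Longrightarrow> integrable M (\<lambda>\<omega>. h \<omega> t)" unfolding h_def using i1 i2 by simp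
  have ig: "integrable M g" unfolding g_def
    by (intro integrable_divide_zero integrable_sum) (use ih in auto)
  have Eh: "\<And>t. t < T \<Longrightarrow> (\<integral>\<omega>. h \<omega> t \<partial>M) \<le> 2 * exp (nu * s^2 / 2)"
  proof -
    fix t assume t: "t < T"
    have "(\<integral>\<omega>. h \<omega> t \<partial>M) = (\<integral>\<omega>. exp (s * N \<omega> t) \<partial>M) + (\<integral>\<omega>. exp ((-s) * N \<omega> t) \<partial>M)"
      unfolding h_def using i1[OF t] i2[OF t] by (rule Bochner_Integration.integral_add)
    also have "\<dots> \<le> exp (nu * s^2 / 2) + exp (nu * (-s)^2 / 2)" by (rule add_mono[OF e1[OF t] e2[OF t]])
    finally show "(\<integral>\<omega>. h \<omega> t \<partial>M) \<le> 2 * exp (nu * s^2 / 2)" by simp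
  qed
  have "(\<integral>\<omega>. g \<omega> \<partial>M) = (\<Sum>t<T. (\<integral>\<omega>. h \<omega> t \<partial>M)) / real T"
    unfolding g_def using Bochner_Integration.integral_sum[where I="{..<T}" and M=M and f= "\<lambda>t \<omega>. h \<omega> t", symmetric] ih by simp
  also have "\<dots> \<le> (\<Sum>t<T. 2 * exp (nu * s^2 / 2)) / real T"
    by (intro divide_right_mono sum_mono Eh) auto
  also have "\<dots> = 2 * exp (real p)" using T nu by (simp add: s2)
  finally have Eg: "(\<integral>\<omega>. g \<omega> \<partial>M) \<le> 2 * exp (real p)" .
  define c where "c = x^p * s^(2*p) / fact (2*p)"
  have c: "c > 0" using x s by (simp add: c_def)
  have hpos: "\<And>\<omega> t. h \<omega> t \<ge> 0" unfolding h_def by (simp add: add_nonneg_nonneg)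
  have sub: "{\<omega>\<in>space M. x < (\<Sum>t<T. (N \<omega> t)^2) / real T} \<subseteq> {\<omega>\<in>space M. c \<le> g \<omega>}"
  proof safe
    fix \<omega> assume "\<omega> \<in> space M" and lt: "x < (\<Sum>t<T. (N \<omega> t)^2) / real T"
    have "x^p \<le> ((\<Sum>t<T. (N \<omega> t)^2) / real T)^p"
      using lt x by (intro power_mono) auto
    also have "\<dots> \<le> (\<Sum>t<T. ((N \<omega> t)^2)^p) / real T"
      by (rule avg_pow_le[OF T]) simp
    also have "\<dots> \<le> (\<Sum>t<T. fact (2*p) / s^(2*p) * h \<omega> t) / real T"
    proof (intro divide_right_mono sum_mono)
      fix t
      have "((N \<omega> t)^2)^p * s^(2*p) = (s * N \<omega> t)^(2*p)"
        by (simp add: power_mult[symmetric] power_mult_distrib mult.commute)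
      also have "\<dots> \<le> fact (2*p) * h \<omega> t"
        unfolding h_def using pow_even_le_exp[of "s * N \<omega> t" p] by simp
      finally have H: "((N \<omega> t)^2)^p * s^(2*p) \<le> fact (2*p) * h \<omega> t" .
      have sp: "s^(2*p) > 0" using s by simp
      have "((N \<omega> t)^2)^p \<le> fact (2*p) * h \<omega> t / s^(2*p)"
        using H sp by (simp only: pos_le_divide_eq)
      then show "((N \<omega> t)^2)^p \<le> fact (2*p) / s^(2*p) * h \<omega> t"
        by (simp only: times_divide_eq_left)
    qed simp
    also have "\<dots> = fact (2*p) / s^(2*p) * g \<omega>"
      by (simp only: g_def sum_distrib_left[symmetric] times_divide_eq_right)
    finally have "x^p \<le> fact (2*p) / s^(2*p) * g \<omega>" .
    then have "x^p \<le> fact (2*p) * g \<omega> / s^(2*p)" by (simp only: times_divide_eq_left)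
    moreover have sp: "s^(2*p) > 0" using s by simp
    ultimately have "x^p * s^(2*p) \<le> fact (2*p) * g \<omega>" by (simp only: pos_le_divide_eq)
    moreover have fp: "(fact (2*p) :: real) > 0" by simp
    ultimately have "x^p * s^(2*p) \<le> g \<omega> * fact (2*p)" by (simp only: mult.commute)
    then show "c \<le> g \<omega>" unfolding c_def using fp by (simp only: pos_divide_le_eq)
  qed
  have "measure M {\<omega>\<in>space M. x < (\<Sum>t<T. (N \<omega> t)^2) / real T} \<le> measure M {\<omega>\<in>space M. c \<le> g \<omega>}"
    by (rule finite_measure_mono[OF sub]) (simp add: g_def h_def)
  also have "\<dots> \<le> (\<integral>\<omega>. g \<omega> \<partial>M) / c"
    by (rule integral_Markov_inequality_measure[OF ig, of "space M"])
       (use c hpos in \<open>auto simp: g_def intro!: sum_nonneg divide_nonneg_nonneg\<close>)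
  also have "\<dots> \<le> 2 * exp (real p) / c"
    by (rule divide_right_mono[OF Eg]) (use c in simp)
  also have "\<dots> \<le> 2 * (2 * exp 1 * real p * nu / x)^p"
  proof -
    have ep: "exp (real p) = (exp 1)^p" by (simp add: exp_of_nat_mult[symmetric])
    have sp: "s^(2*p) = (2 * real p / nu)^p" by (simp add: power_mult s2)
    have f: "fact (2*p) \<le> (2 * real p)^p * (2 * real p)^p"
    proof -
      have f0: "fact (2*p) \<le> (real (2*p))^(2*p)"
        using fact_le_power[of "2*p", where 'a=real] by (simp only: of_nat_power)
      have e1: "real (2*p) = 2 * real p" by simp
      have e2: "(2 * real p)^p * (2 * real p)^p = (2 * real p)^(p+p)" by (rule power_add[symmetric])
      have e3: "p + p = 2 * p" by simp
      show ?thesis using f0 unfolding e2 e3 e1 .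
    qed
    have "2 * exp (real p) / c = 2 * (exp 1)^p * fact (2*p) / (x^p * (2 * real p / nu)^p)"
      unfolding c_def ep sp by simp
    also have "\<dots> \<le> 2 * (exp 1)^p * ((2 * real p)^p * (2 * real p)^p) / (x^p * (2 * real p / nu)^p)"
      using x nu p by (intro divide_right_mono mult_left_mono f) auto
    also have "\<dots> = 2 * (2 * exp 1 * real p * nu / x)^p"
    proof -
      have aux: "\<And>E A V X::real. A > 0 \<Longrightarrow> X > 0 \<Longrightarrow> V > 0 \<Longrightarrow>
          2 * E * (A * A) / (X * (A / V)) = 2 * (E * A * V / X)"
        by (simp add: field_simps)
      have r: "(2 * exp 1 * real p * nu / x)^p = (exp 1)^p * (2 * real p)^p * nu^p / x^p"
        by (simp add: power_divide power_mult_distrib)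
      have q: "(2 * real p / nu)^p = (2 * real p)^p / nu^p" by (simp add: power_divide)
      show ?thesis unfolding r q using x nu p
        by (intro aux) auto
    qed
    finally show ?thesis .
  qed
  finally show ?thesis .
qed



definition mtr :: "'a::comm_ring_1 mat \<Rightarrow> 'a" where "mtr A = (\<Sum>i<dim_row A. A $$ (i,i))"

lemma mtr_comm:
  assumes A: "A \<in> carrier_mat n n" and B: "B \<in> carrier_mat n n"
  shows "mtr (A * B) = mtr (B * A)"
proof -
  have "mtr (A * B) = (\<Sum>i<n. \<Sum>k<n. A $$ (i,k) * B $$ (k,i))"
    unfolding mtr_def using A B
    by (simp add: scalar_prod_def atLeast0LessThan)
  also have "\<dots> = (\<Sum>k<n. \<Sum>i<n. B $$ (k,i) * A $$ (i,k))"
    by (subst sum.swap) (simp add: mult.commute)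
  also have "\<dots> = mtr (B * A)"
    unfolding mtr_def using A B
    by (simp add: scalar_prod_def atLeast0LessThan)
  finally show ?thesis .
qed

lemma mtr_similar:
  assumes "similar_mat_wit A B P Q"
  shows "mtr A = mtr B"
proof -
  define n where "n = dim_row A"
  have W: "{A,B,P,Q} \<subseteq> carrier_mat n n" "Q * P = 1\<^sub>m n" "A = P * B * Q"
    using assms unfolding similar_mat_wit_def n_def Let_def by blast+
  have c: "A \<in> carrier_mat n n" "B \<in> carrier_mat n n" "P \<in> carrier_mat n n" "Q \<in> carrier_mat n n"
    using W(1) by blast+
  note QP = W(2) and eq = W(3)
  have "mtr A = mtr ((P * B) * Q)" using eq by simp
  also have "\<dots> = mtr (Q * (P * B))" by (rule mtr_comm[of _ n]) (use c in auto)
  also have "Q * (P * B) = (Q * P) * B" using c by (simp add: assoc_mult_mat)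
  also have "\<dots> = B" using c QP by simp
  finally show ?thesis .
qed

lemma sum_list_nonzero: "sum_list (xs :: 'a::comm_monoid_add list) \<noteq> 0 \<Longrightarrow> \<exists>a\<in>set xs. a \<noteq> 0"
proof (induction xs)
  case Nil
  then show ?case by simp
next
  case (Cons x xs)
  show ?case
  proof (cases "x = 0")
    case True
    then have "sum_list xs \<noteq> 0" using Cons.prems by simp
    then obtain a where "a \<in> set xs" "a \<noteq> 0" using Cons.IH by blast
    then show ?thesis by auto
  next
    case False
    then show ?thesis by auto
  qed
qed

lemma sym_nonzero_eig:
  fixes A :: "real mat"
  assumes A: "A \<in> carrier_mat n n" and sym: "\<And>i j. i < n \<Longrightarrow> j < n \<Longrightarrow> A $$ (i,j) = A $$ (j,i)"
    and tr: "(\<Sum>i<n. A $$ (i,i)) \<noteq> 0"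
  shows "\<exists>k. eigenvalue A k \<and> k \<noteq> 0"
proof -
  define Ac where "Ac = map_mat complex_of_real A"
  have Ac: "Ac \<in> carrier_mat n n" using A by (simp add: Ac_def)
  obtain as where cp: "char_poly Ac = (\<Prod>a\<leftarrow>as. [:-a,1:])" using char_poly_factorized[OF Ac] by blast
  obtain B P Q where sd: "schur_decomposition Ac as = (B,P,Q)" by (metis prod_cases3)
  note S3 = schur_decomposition[OF Ac cp sd]
  have sim: "similar_mat_wit Ac B P Q" using conjunct1[OF S3] .
  have diag: "diag_mat B = as" using conjunct2[OF conjunct2[OF S3]] .
  have "{Ac,B,P,Q} \<subseteq> carrier_mat (dim_row Ac) (dim_row Ac)"
    using sim unfolding similar_mat_wit_def Let_def by blast
  then have Bc: "B \<in> carrier_mat n n" using Ac by blast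
  have eq1: "mtr Ac = complex_of_real (\<Sum>i<n. A $$ (i,i))" using A by (simp add: mtr_def Ac_def)
  have neq: "complex_of_real (\<Sum>i<n. A $$ (i,i)) \<noteq> 0" using tr by (simp only: of_real_eq_0_iff not_False_eq_True)
  have eq2: "mtr Ac = mtr B" by (rule mtr_similar[OF sim])
  have eq3: "mtr B = sum_list as"
    unfolding diag[symmetric] diag_mat_def mtr_def using Bc
    by (simp add: sum_list_sum_nth atLeast0LessThan)
  have "sum_list as \<noteq> 0" using neq unfolding eq1[symmetric] eq2 eq3 .
  then obtain a where a: "a \<in> set as" "a \<noteq> 0" using sum_list_nonzero by blast
  have "poly (char_poly Ac) a = 0"
    unfolding cp poly_prod_list using a(1)
    by (auto simp: prod_list_zero_iff)
  then have "eigenvalue Ac a" using eigenvalue_root_char_poly[OF Ac] by simp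
  then obtain v where v: "v \<in> carrier_vec n" "v \<noteq> 0\<^sub>v n" "Ac *\<^sub>v v = a \<cdot>\<^sub>v v"
    unfolding eigenvalue_def eigenvector_def using Ac by auto
  have Av: "\<And>i. i < n \<Longrightarrow> (\<Sum>j<n. complex_of_real (A $$ (i,j)) * v $ j) = a * v $ i"
  proof -
    fix i assume i: "i < n"
    have "(Ac *\<^sub>v v) $ i = (\<Sum>j<n. complex_of_real (A $$ (i,j)) * v $ j)"
      using i A v(1) by (simp add: Ac_def scalar_prod_def atLeast0LessThan)
    then show "(\<Sum>j<n. complex_of_real (A $$ (i,j)) * v $ j) = a * v $ i"
      using v(3) i v(1) by simp
  qed
  define w where "w = (\<Sum>i<n. \<Sum>j<n. cnj (v $ i) * complex_of_real (A $$ (i,j)) * v $ j)"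
  define S where "S = (\<Sum>i<n. (Re (v $ i))^2 + (Im (v $ i))^2)"
  have wS: "w = a * complex_of_real S"
  proof -
    have "w = (\<Sum>i<n. cnj (v $ i) * (\<Sum>j<n. complex_of_real (A $$ (i,j)) * v $ j))"
      unfolding w_def by (simp add: sum_distrib_left mult.assoc)
    also have "\<dots> = (\<Sum>i<n. cnj (v $ i) * (a * v $ i))"
      by (rule sum.cong[OF refl]) (subst Av, simp_all)
    also have "\<dots> = (\<Sum>i<n. a * (cnj (v $ i) * v $ i))"
      by (simp add: mult.commute mult.left_commute)
    also have "\<dots> = a * complex_of_real S"
    proof -
      have "\<And>i. cnj (v $ i) * v $ i = complex_of_real ((Re (v $ i))^2 + (Im (v $ i))^2)"
        by (subst mult.commute) (rule complex_mult_cnj)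
      note cc = this
      have "(\<Sum>i<n. a * (cnj (v $ i) * v $ i)) = a * (\<Sum>i<n. cnj (v $ i) * v $ i)"
        by (rule sum_distrib_left[symmetric])
      also have "(\<Sum>i<n. cnj (v $ i) * v $ i) = complex_of_real S"
        unfolding S_def of_real_sum by (rule sum.cong[OF refl]) (rule cc)
      finally show ?thesis .
    qed
    finally show ?thesis .
  qed
  have "cnj w = w"
  proof -
    have "cnj w = (\<Sum>i<n. \<Sum>j<n. v $ i * complex_of_real (A $$ (i,j)) * cnj (v $ j))"
      unfolding w_def by simp
    also have "\<dots> = (\<Sum>j<n. \<Sum>i<n. v $ i * complex_of_real (A $$ (i,j)) * cnj (v $ j))"
      by (rule sum.swap)
    also have "\<dots> = w"
      unfolding w_def by (intro sum.cong refl) (auto simp: sym mult.commute mult.left_commute)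
    finally show ?thesis .
  qed
  then have "Im (cnj w) = Im w" by simp
  then have Imw: "Im w = 0" by simp
  obtain i where i: "i < n" "v $ i \<noteq> 0"
    using v(1,2) by (auto simp: vec_eq_iff)
  have ti: "(Re (v $ i))^2 + (Im (v $ i))^2 > 0"
    using i(2) by (auto simp: sum_power2_gt_zero_iff complex_eq_iff)
  have "(Re (v $ i))^2 + (Im (v $ i))^2 \<le> S"
    unfolding S_def by (rule member_le_sum[where f = "\<lambda>i. (Re (v $ i))^2 + (Im (v $ i))^2"]) (use i in auto)
  with ti have Spos: "S > 0" by linarith
  have "Im a * S = 0" using Imw unfolding wS by simp
  then have Ima: "Im a = 0" using Spos by simp
  define r where "r = Re a"
  have ar: "a = complex_of_real r" using Ima by (simp add: r_def complex_eq_iff)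
  have r0: "r \<noteq> 0" using a(2) ar by simp
  have "complex_of_real (poly (char_poly A) r) = poly (char_poly Ac) a"
    unfolding Ac_def of_real_hom.char_poly_hom[OF A] ar by simp
  also have "\<dots> = 0" by fact
  finally have "poly (char_poly A) r = 0" by simp
  then have "eigenvalue A r" using eigenvalue_root_char_poly[OF A] by simp
  then show ?thesis using r0 by blast
qed



lemma quad_eq: "(\<Sum>t<T. \<Sum>s<T. x t * centering T t s * y s) = (\<Sum>t<T. x t * centered T y t)"
  by (simp add: centered_def sum_distrib_left mult.assoc)

lemma quad_sym: "(\<Sum>t<T. \<Sum>s<T. x t * centering T t s * y s) = (\<Sum>t<T. \<Sum>s<T. y t * centering T t s * x s)"
proof -
  have "(\<Sum>t<T. \<Sum>s<T. x t * centering T t s * y s) = (\<Sum>s<T. \<Sum>t<T. x t * centering T t s * y s)"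
    by (rule sum.swap)
  also have "\<dots> = (\<Sum>t<T. \<Sum>s<T. y t * centering T t s * x s)"
    by (intro sum.cong refl) (auto simp: centering_def)
  finally show ?thesis .
qed

lemma quad_diag:
  assumes "T > 0"
  shows "(1 / real T) * (\<Sum>t<T. \<Sum>s<T. x t * centering T t s * x s) = sig_power T x"
proof -
  have "(\<Sum>t<T. x t * centered T x t) = (\<Sum>t<T. centered T x t * centered T x t)"
    using cross_eq[OF assms, of x x] by (simp add: mult.commute)
  then show ?thesis unfolding quad_eq sig_power_def by (simp add: power2_eq_square)
qed

lemma corr_carrier: "corr_mat n T Z \<in> carrier_mat n n"
  by (simp add: corr_mat_def)

lemma corr_sym: "i < n \<Longrightarrow> j < n \<Longrightarrow> corr_mat n T Z $$ (i,j) = corr_mat n T Z $$ (j,i)"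
  unfolding corr_mat_def using quad_sym[where T=T and x="Z i" and y="Z j"] by (simp add: mult.commute)

lemma corr_diag:
  assumes "i < n" "T > 0" "sig_power T (Z i) > 0"
  shows "corr_mat n T Z $$ (i,i) = 1"
proof -
  have h: "(\<Sum>t<T. \<Sum>s<T. Z i t * centering T t s * Z i s) = sig_power T (Z i) * real T"
    using quad_diag[OF assms(2), of "Z i"] assms(2) by (simp add: field_simps)
  show ?thesis unfolding corr_mat_def using assms by (simp add: h)
qed

lemma cond_ge_1:
  assumes n: "n > 0" and T: "T > 0" and sp: "\<And>i. i < n \<Longrightarrow> sig_power T (Z i) > 0"
    and lm: "lam_min_nz (corr_mat n T Z) > 0"
  shows "cond_number (corr_mat n T Z) \<ge> 1"
proof -
  define A where "A = corr_mat n T Z"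
  have A: "A \<in> carrier_mat n n" by (simp add: A_def corr_carrier)
  have tr: "(\<Sum>i<n. A $$ (i,i)) = real n"
    using sp T by (simp add: A_def corr_diag)
  have "\<exists>k. eigenvalue A k \<and> k \<noteq> 0"
    by (rule sym_nonzero_eig[OF A]) (use tr n in \<open>auto simp: A_def corr_sym\<close>)
  then have ne: "{k. eigenvalue A k \<and> k \<noteq> 0} \<noteq> {}" by blast
  have fin: "finite {k. eigenvalue A k}"
  proof -
    have "coeff (char_poly A) n = 1" using degree_monic_char_poly[OF A] by simp
    then have "char_poly A \<noteq> 0" by auto
    then have "finite {k. poly (char_poly A) k = 0}" by (rule poly_roots_finite)
    then show ?thesis using eigenvalue_root_char_poly[OF A] by simp
  qed
  have fin2: "finite {k. eigenvalue A k \<and> k \<noteq> 0}" by (rule finite_subset[OF _ fin]) auto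
  have "lam_min_nz A \<in> {k. eigenvalue A k \<and> k \<noteq> 0}"
    unfolding lam_min_nz_def by (rule Min_in[OF fin2 ne])
  then have "lam_min_nz A \<le> lam_max A"
    unfolding lam_max_def by (intro Max_ge[OF fin]) auto
  moreover have "lam_min_nz A > 0" using lm by (simp add: A_def)
  ultimately have "lam_max A / lam_min_nz A \<ge> 1" by simp
  then show ?thesis by (simp add: cond_number_def A_def)
qed



lemma ratio_bound:
  fixes s1 s2 h1 h2 d :: real
  assumes s1: "s1 > 0" and s2: "s2 > 0" and b1: "\<bar>h1 / s1 - 1\<bar> \<le> d" and b2: "\<bar>h2 / s2 - 1\<bar> \<le> d"
    and d: "d \<le> 1/2"
  shows "\<bar>sqrt s1 * sqrt s2 / (sqrt h1 * sqrt h2) - 1\<bar> \<le> 2 * d"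
proof -
  define a where "a = h1 / s1"
  define b where "b = h2 / s2"
  have d0: "d \<ge> 0" using b1 by linarith
  have a: "1 - d \<le> a" "a \<le> 1 + d" using b1 by (auto simp: a_def)
  have b: "1 - d \<le> b" "b \<le> 1 + d" using b2 by (auto simp: b_def)
  have a0: "a > 0" "b > 0" using a b d by auto
  have h1: "h1 = a * s1" and h2: "h2 = b * s2" using s1 s2 by (auto simp: a_def b_def)
  define q where "q = sqrt (a * b)"
  have "(1 - d)^2 \<le> a * b" unfolding power2_eq_square
    by (rule mult_mono) (use a b d in auto)
  then have q1: "1 - d \<le> q" unfolding q_def by (rule real_le_rsqrt)
  have "a * b \<le> (1 + d)^2" unfolding power2_eq_square
    by (rule mult_mono) (use a b d d0 in auto)
  then have q2: "q \<le> 1 + d" unfolding q_def using d0 by (intro real_le_lsqrt) auto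
  have q0: "q > 0" using q1 d by linarith
  have eq: "sqrt s1 * sqrt s2 / (sqrt h1 * sqrt h2) = 1 / q"
  proof -
    have "sqrt h1 * sqrt h2 = q * (sqrt s1 * sqrt s2)"
      unfolding h1 h2 q_def real_sqrt_mult by (simp only: mult_ac)
    moreover have "sqrt s1 * sqrt s2 > 0" using s1 s2 by simp
    ultimately show ?thesis using q0 s1 s2 by simp
  qed
  have up: "1 / q - 1 \<le> 2 * d"
  proof -
    have "1 / q \<le> 1 / (1 - d)" using q1 d by (intro divide_left_mono) auto
    also have "\<dots> \<le> 1 + 2 * d"
    proof -
      have "0 \<le> d * (1 - 2 * d)" using d d0 by (intro mult_nonneg_nonneg) auto
      then have "1 \<le> (1 + 2 * d) * (1 - d)" by (simp add: algebra_simps)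
      then show ?thesis using d by (simp add: divide_le_eq)
    qed
    finally show ?thesis by simp
  qed
  have lo: "1 / q - 1 \<ge> - 2 * d"
  proof -
    have "1 / (1 + d) \<le> 1 / q" using q2 q0 by (intro divide_left_mono) auto
    moreover have "1 - 2 * d \<le> 1 / (1 + d)"
    proof -
      have "0 \<le> d * (1 + 2 * d)" using d d0 by (intro mult_nonneg_nonneg) auto
      then have "(1 - 2 * d) * (1 + d) \<le> 1" by (simp add: algebra_simps)
      then show ?thesis using d0 by (simp add: le_divide_eq)
    qed
    ultimately show ?thesis by simp
  qed
  show ?thesis unfolding eq using up lo by simp
qed


lemma det_i:
  fixes z y :: "nat \<Rightarrow> real"
  assumes T: "T > 0" and s: "sig_power T z > 0" and nu: "nu > 0"
    and g: "g > 0" "g \<le> sig_power T z / nu"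
    and L: "L \<ge> 0" and K: "K \<ge> 4"
    and A1: "\<bar>\<Sum>t<T. (centered T z t / sqrt (real T * sig_power T z)) * y t\<bar> \<le> sqrt (4 * nu * L)"
    and A2: "(\<Sum>t<T. (y t)^2) / real T \<le> K * nu * L"
  shows "\<bar>sig_power T (\<lambda>t. z t + y t) / sig_power T z - 1\<bar> \<le> K * (L / g + sqrt (L / (real T * g)))"
proof -
  define s where "s = sig_power T z"
  define X where "X = (\<Sum>t<T. centered T z t * y t)"
  define Y where "Y = (\<Sum>t<T. (centered T y t)^2)"
  have Tr: "real T > 0" using T by simp
  have s0: "s > 0" using s by (simp add: s_def)
  have Ts: "real T * s > 0" using Tr s0 by simp
  have hs: "sig_power T (\<lambda>t. z t + y t) = s + (2 / real T) * X + (1 / real T) * Y"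
    unfolding s_def X_def Y_def sig_power_add cross_eq[OF T] ..
  have Y0: "Y \<ge> 0" unfolding Y_def by (intro sum_nonneg) simp
  have YB: "Y \<le> (\<Sum>t<T. (y t)^2)" unfolding Y_def by (rule sq_le[OF T])
  have Xu: "X = sqrt (real T * s) * (\<Sum>t<T. (centered T z t / sqrt (real T * s)) * y t)"
  proof -
    have sq: "sqrt (real T * s) > 0" using Ts by simp
    have "sqrt (real T * s) * (\<Sum>t<T. (centered T z t / sqrt (real T * s)) * y t)
        = (\<Sum>t<T. sqrt (real T * s) * ((centered T z t / sqrt (real T * s)) * y t))"
      by (rule sum_distrib_left)
    also have "\<dots> = X" unfolding X_def
      by (rule sum.cong[OF refl]) (use sq s0 in simp)
    finally show ?thesis by simp
  qed
  have Xb: "\<bar>X\<bar> \<le> sqrt (real T * s) * sqrt (4 * nu * L)"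
  proof -
    have e: "\<bar>sqrt (real T * s)\<bar> = sqrt (real T * s)" using Ts by simp
    show ?thesis unfolding Xu abs_mult e using A1 unfolding s_def[symmetric]
      using Ts by (intro mult_left_mono) auto
  qed
  have gs: "nu * g \<le> s" using g(2) nu by (simp add: s_def field_simps)
  define a where "a = 2 * X / (real T * s)"
  define b where "b = Y / (real T * s)"
  have split: "sig_power T (\<lambda>t. z t + y t) / sig_power T z - 1 = a + b"
    unfolding hs s_def[symmetric] a_def b_def using s0 Tr by (simp add: field_simps)
  have ab: "\<bar>a\<bar> \<le> 4 * sqrt (L / (real T * g))"
  proof -
    have "\<bar>a\<bar> = 2 * \<bar>X\<bar> / (real T * s)" unfolding a_def using Ts s0 by (simp add: abs_mult)
    also have "\<dots> \<le> 2 * (sqrt (real T * s) * sqrt (4 * nu * L)) / (real T * s)"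
      using Xb Ts by (intro divide_right_mono) auto
    also have "\<dots> = 4 * sqrt (nu * L / (real T * s))"
    proof -
      have e1: "sqrt (4 * nu * L) = 2 * sqrt (nu * L)"
        by (simp add: real_sqrt_mult mult.assoc)
      define q where "q = sqrt (real T * s)"
      have e2: "real T * s = q * q" using Ts by (simp add: q_def)
      have sq: "q > 0" using Ts by (simp add: q_def)
      have aux: "\<And>r. 2 * (q * (2 * r)) / (q * q) = 4 * r / q" using sq by (simp add: field_simps)
      have "2 * (sqrt (real T * s) * sqrt (4 * nu * L)) / (real T * s)
          = 4 * sqrt (nu * L) / sqrt (real T * s)"
        unfolding e1 q_def[symmetric] by (unfold e2) (rule aux)
      also have "\<dots> = 4 * sqrt (nu * L / (real T * s))" by (simp add: real_sqrt_divide)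
      finally show ?thesis .
    qed
    also have "\<dots> \<le> 4 * sqrt (L / (real T * g))"
    proof -
      have "nu * L / (real T * s) \<le> L / (real T * g)"
      proof -
        have ns: "nu / s \<le> 1 / g" using gs s0 g(1) by (simp add: field_simps)
        have e1: "nu * L / (real T * s) = (L / real T) * (nu / s)" by simp
        have e2: "L / (real T * g) = (L / real T) * (1 / g)" by simp
        show ?thesis unfolding e1 e2 using ns L Tr by (intro mult_left_mono) auto
      qed
      then show ?thesis by simp
    qed
    finally show ?thesis .
  qed
  have b0: "b \<ge> 0" unfolding b_def using Y0 Ts by simp
  have bb: "b \<le> K * (L / g)"
  proof -
    have "b \<le> ((\<Sum>t<T. (y t)^2) / real T) / s" unfolding b_def using YB Ts s0
      by (simp add: divide_right_mono divide_divide_eq_left mult.commute)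
    also have "\<dots> \<le> (K * nu * L) / s" using A2 s0 by (intro divide_right_mono) auto
    also have "\<dots> \<le> K * (L / g)"
    proof -
      have ns: "nu / s \<le> 1 / g" using gs s0 g(1) by (simp add: field_simps)
      have e1: "K * nu * L / s = (K * L) * (nu / s)" by simp
      have e2: "K * (L / g) = (K * L) * (1 / g)" by simp
      show ?thesis unfolding e1 e2 using ns L K by (intro mult_left_mono) auto
    qed
    finally show ?thesis .
  qed
  have "\<bar>a + b\<bar> \<le> \<bar>a\<bar> + b" using b0 by simp
  also have "\<dots> \<le> 4 * sqrt (L / (real T * g)) + K * (L / g)" using ab bb by simp
  also have "\<dots> \<le> K * sqrt (L / (real T * g)) + K * (L / g)"
    using K L Tr g(1) by (intro add_right_mono mult_right_mono) auto
  finally show ?thesis unfolding split by (simp add: algebra_simps)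
qed



lemma main_k:
  fixes M :: "'a measure" and n T :: nat and Z :: "nat \<Rightarrow> nat \<Rightarrow> real"
    and N :: "'a \<Rightarrow> nat \<Rightarrow> nat \<Rightarrow> real" and nu :: "nat \<Rightarrow> real"
  assumes P: "prob_space M" and T: "T > 0" and n: "n \<ge> 3"
    and sp: "\<And>i. i < n \<Longrightarrow> sig_power T (Z i) > 0"
    and nup: "\<And>i. i < n \<Longrightarrow> nu i > 0"
    and sg: "\<And>i. i < n \<Longrightarrow> subgaussian_vec M T (\<lambda>\<omega>. N \<omega> i) (nu i)"
    and small: "4 * exp 3 * (ln (real n) / snr_gamma n T Z nu
                 + sqrt (ln (real n) / (real T * snr_gamma n T Z nu))) \<le> 1/2"
  shows "measure M {\<omega> \<in> space M. \<exists>i<n. \<exists>j<n.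
                \<bar>sqrt (sig_power T (Z i)) * sqrt (sig_power T (Z j))
                  / (sqrt (sig_power T (\<lambda>t. Z i t + N \<omega> i t))
                     * sqrt (sig_power T (\<lambda>t. Z j t + N \<omega> j t))) - 1\<bar>
                > (8 * exp 3) * (ln (real n) / snr_gamma n T Z nu
                       + sqrt (ln (real n) / (real T * snr_gamma n T Z nu)))} \<le> 4 / real n"
proof -
  interpret prob_space M by fact
  define g where "g = snr_gamma n T Z nu"
  define L where "L = ln (real n)"
  define K :: real where "K = 4 * exp 3"
  define r where "r = L / g + sqrt (L / (real T * g))"
  have n0: "real n > 0" using n by simp
  have fin: "finite ((\<lambda>i. sig_power T (Z i) / nu i) ` {..<n})" by simp
  have ne: "(\<lambda>i. sig_power T (Z i) / nu i) ` {..<n} \<noteq> {}" using n by (auto simp: lessThan_empty_iff)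
  have g0: "g > 0" unfolding g_def snr_gamma_def
    using Min_gr_iff[OF fin ne] sp nup by auto
  have gle: "\<And>i. i < n \<Longrightarrow> g \<le> sig_power T (Z i) / nu i"
    unfolding g_def snr_gamma_def by (rule Min_le[OF fin]) auto
  have L1: "L \<ge> 1"
  proof -
    have "exp 1 \<le> real n" using exp_le n by linarith
    then show ?thesis unfolding L_def using ln_ge_iff[OF n0] by simp
  qed
  have K4: "K \<ge> 4" unfolding K_def using exp_ge_add_one_self[of "3::real"] by linarith
  have hexp: "exp (- (2 * L)) = 1 / (real n)^2"
  proof -
    have "exp (2 * L) = (exp L)^2" using exp_of_nat_mult[of 2 L] by simp
    also have "exp L = real n" unfolding L_def using n0 by simp
    finally have "exp (2 * L) = (real n)^2" .
    then show ?thesis by (simp add: exp_minus inverse_eq_divide)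
  qed
  define u where "u = (\<lambda>i t. centered T (Z i) t / sqrt (real T * sig_power T (Z i)))"
  have unit: "\<And>i. i < n \<Longrightarrow> (\<Sum>t<T. (u i t)^2) = 1"
  proof -
    fix i assume i: "i < n"
    have Ts: "real T * sig_power T (Z i) > 0" using T sp[OF i] by simp
    have "(\<Sum>t<T. (u i t)^2) = (\<Sum>t<T. (centered T (Z i) t)^2) / (real T * sig_power T (Z i))"
      unfolding u_def using Ts by (simp add: power_divide sum_divide_distrib)
    also have "(\<Sum>t<T. (centered T (Z i) t)^2) = real T * sig_power T (Z i)"
      using T by (simp add: sig_power_def)
    finally show "(\<Sum>t<T. (u i t)^2) = 1" using Ts T sp[OF i] by simp
  qed
  have sgu: "\<And>i. i < n \<Longrightarrow> subgaussian M (\<lambda>\<omega>. \<Sum>t<T. u i t * N \<omega> i t) (nu i)"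
    using sg unit unfolding subgaussian_vec_def by blast
  have sgc: "\<And>i t0. i < n \<Longrightarrow> t0 < T \<Longrightarrow> subgaussian M (\<lambda>\<omega>. N \<omega> i t0) (nu i)"
  proof -
    fix i t0 assume i: "i < n" and t0: "t0 < T"
    define e where "e = (\<lambda>t. if t = t0 then (1::real) else 0)"
    have "(\<Sum>t<T. (e t)^2) = 1" unfolding e_def using t0
      by (simp add: if_distrib[of "\<lambda>x. x^2"] cong: if_cong)
    then have "subgaussian M (\<lambda>\<omega>. \<Sum>t<T. e t * N \<omega> i t) (nu i)"
      using sg[OF i] unfolding subgaussian_vec_def by blast
    moreover have "(\<lambda>\<omega>. \<Sum>t<T. e t * N \<omega> i t) = (\<lambda>\<omega>. N \<omega> i t0)"
      unfolding e_def using t0 by (simp add: if_distrib[of "\<lambda>x. x * _"] cong: if_cong)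
    ultimately show "subgaussian M (\<lambda>\<omega>. N \<omega> i t0) (nu i)" by simp
  qed
  define A1 where "A1 = (\<lambda>i. {\<omega>\<in>space M. sqrt (4 * nu i * L) < \<bar>\<Sum>t<T. u i t * N \<omega> i t\<bar>})"
  define A2 where "A2 = (\<lambda>i. {\<omega>\<in>space M. K * nu i * L < (\<Sum>t<T. (N \<omega> i t)^2) / real T})"
  have A1s: "\<And>i. i < n \<Longrightarrow> A1 i \<in> sets M"
  proof -
    fix i assume i: "i < n"
    have [measurable]: "(\<lambda>\<omega>. \<Sum>t<T. u i t * N \<omega> i t) \<in> borel_measurable M"
      using sgu[OF i] by (simp add: subgaussian_def)
    show "A1 i \<in> sets M" unfolding A1_def by measurable
  qed
  have A2s: "\<And>i. i < n \<Longrightarrow> A2 i \<in> sets M"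
  proof -
    fix i assume i: "i < n"
    have "\<And>t. t \<in> {..<T} \<Longrightarrow> (\<lambda>\<omega>. N \<omega> i t) \<in> borel_measurable M"
      using sgc[OF i] by (simp add: subgaussian_def)
    then have [measurable]: "(\<lambda>\<omega>. (\<Sum>t<T. (N \<omega> i t)^2) / real T) \<in> borel_measurable M"
      by (intro borel_measurable_divide borel_measurable_sum borel_measurable_power) auto
    show "A2 i \<in> sets M" unfolding A2_def by measurable
  qed
  have mA1: "\<And>i. i < n \<Longrightarrow> measure M (A1 i) \<le> 2 / (real n)^2"
  proof -
    fix i assume i: "i < n"
    have x0: "sqrt (4 * nu i * L) > 0" using nup[OF i] L1 by simp
    have "measure M (A1 i) \<le> 2 * exp (- ((sqrt (4 * nu i * L))^2) / (2 * nu i))"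
      unfolding A1_def by (rule subg_tail[OF P sgu[OF i] nup[OF i] x0])
    also have "- ((sqrt (4 * nu i * L))^2) / (2 * nu i) = - (2 * L)"
      using nup[OF i] L1 by simp
    finally show "measure M (A1 i) \<le> 2 / (real n)^2" unfolding hexp by simp
  qed
  have mA2: "\<And>i. i < n \<Longrightarrow> measure M (A2 i) \<le> 2 / (real n)^2"
  proof -
    fix i assume i: "i < n"
    define p where "p = nat \<lceil>L\<rceil>"
    have pL: "real p \<ge> L" unfolding p_def by linarith
    have pL2: "real p \<le> 2 * L" unfolding p_def using L1 by linarith
    have p1: "p \<ge> 1" using pL L1 by linarith
    have x0: "K * nu i * L > 0" using nup[OF i] L1 K4 by simp
    have "measure M (A2 i) \<le> 2 * (2 * exp 1 * real p * nu i / (K * nu i * L))^p"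
      unfolding A2_def by (rule avg_tail[OF P T sgc[OF i] nup[OF i] p1 x0])
    also have "\<dots> \<le> 2 * (exp (-2))^p"
    proof -
      have e3: "exp (3::real) = exp 1 * exp 2" by (simp add: exp_add[symmetric])
      have "2 * exp 1 * real p * nu i / (K * nu i * L) = real p / (2 * exp 2 * L)"
        unfolding K_def e3 using nup[OF i] by (simp add: field_simps)
      also have "\<dots> \<le> 2 * L / (2 * exp 2 * L)" using pL2 L1 by (intro divide_right_mono) auto
      also have "\<dots> = exp (-2)" using L1 by (simp add: exp_minus field_simps)
      finally have b: "2 * exp 1 * real p * nu i / (K * nu i * L) \<le> exp (-2)" .
      have b0: "0 \<le> 2 * exp 1 * real p * nu i / (K * nu i * L)" using nup[OF i] L1 K4 by simp
      show ?thesis using b b0 by (intro mult_left_mono power_mono) auto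
    qed
    also have "(exp (-2::real))^p = exp (- (2 * real p))"
      using exp_of_nat_mult[of p "-2::real"] by (simp add: mult.commute)
    also have "exp (- (2 * real p)) \<le> exp (- (2 * L))" using pL by simp
    finally show "measure M (A2 i) \<le> 2 / (real n)^2" unfolding hexp by simp
  qed
  have det: "\<And>\<omega> i. i < n \<Longrightarrow> \<omega> \<notin> A1 i \<Longrightarrow> \<omega> \<notin> A2 i \<Longrightarrow> \<omega> \<in> space M \<Longrightarrow>
      \<bar>sig_power T (\<lambda>t. Z i t + N \<omega> i t) / sig_power T (Z i) - 1\<bar> \<le> K * r"
  proof -
    fix \<omega> i assume i: "i < n" and n1: "\<omega> \<notin> A1 i" and n2: "\<omega> \<notin> A2 i" and om: "\<omega> \<in> space M"
    have a1: "\<bar>\<Sum>t<T. (centered T (Z i) t / sqrt (real T * sig_power T (Z i))) * N \<omega> i t\<bar> \<le> sqrt (4 * nu i * L)"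
      using n1 om unfolding A1_def u_def by auto
    have a2: "(\<Sum>t<T. (N \<omega> i t)^2) / real T \<le> K * nu i * L"
      using n2 om unfolding A2_def by auto
    show "\<bar>sig_power T (\<lambda>t. Z i t + N \<omega> i t) / sig_power T (Z i) - 1\<bar> \<le> K * r"
      unfolding r_def
      by (rule det_i[OF T sp[OF i] nup[OF i] g0 gle[OF i] _ K4 a1 a2]) (use L1 in simp)
  qed
  have Kr: "K * r \<le> 1/2" using small unfolding K_def r_def L_def g_def .
  define B where "B = {\<omega> \<in> space M. \<exists>i<n. \<exists>j<n.
                \<bar>sqrt (sig_power T (Z i)) * sqrt (sig_power T (Z j))
                  / (sqrt (sig_power T (\<lambda>t. Z i t + N \<omega> i t))
                     * sqrt (sig_power T (\<lambda>t. Z j t + N \<omega> j t))) - 1\<bar>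
                > (8 * exp 3) * (ln (real n) / snr_gamma n T Z nu
                       + sqrt (ln (real n) / (real T * snr_gamma n T Z nu)))}"
  have sub: "B \<subseteq> (\<Union>i\<in>{..<n}. A1 i \<union> A2 i)"
  proof
    fix \<omega> assume "\<omega> \<in> B"
    then obtain i j where om: "\<omega> \<in> space M" and i: "i < n" and j: "j < n"
      and gt: "\<bar>sqrt (sig_power T (Z i)) * sqrt (sig_power T (Z j))
                  / (sqrt (sig_power T (\<lambda>t. Z i t + N \<omega> i t))
                     * sqrt (sig_power T (\<lambda>t. Z j t + N \<omega> j t))) - 1\<bar> > 2 * (K * r)"
      unfolding B_def K_def r_def L_def g_def by (auto simp: mult.assoc)
    show "\<omega> \<in> (\<Union>i\<in>{..<n}. A1 i \<union> A2 i)"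
    proof (rule ccontr)
      assume "\<omega> \<notin> (\<Union>i\<in>{..<n}. A1 i \<union> A2 i)"
      then have nn: "\<And>k. k < n \<Longrightarrow> \<omega> \<notin> A1 k \<and> \<omega> \<notin> A2 k" by auto
      have "\<bar>sqrt (sig_power T (Z i)) * sqrt (sig_power T (Z j))
                  / (sqrt (sig_power T (\<lambda>t. Z i t + N \<omega> i t))
                     * sqrt (sig_power T (\<lambda>t. Z j t + N \<omega> j t))) - 1\<bar> \<le> 2 * (K * r)"
        by (rule ratio_bound[OF sp[OF i] sp[OF j] det[OF i _ _ om] det[OF j _ _ om] Kr])
           (use nn i j in auto)
      with gt show False by simp
    qed
  qed
  have "measure M B \<le> measure M (\<Union>i\<in>{..<n}. A1 i \<union> A2 i)"
    by (rule finite_measure_mono[OF sub]) (use A1s A2s in auto)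
  also have "\<dots> \<le> (\<Sum>i<n. measure M (A1 i \<union> A2 i))"
    by (rule finite_measure_subadditive_finite) (use A1s A2s in auto)
  also have "\<dots> \<le> (\<Sum>i<n. 4 / (real n)^2)"
  proof (rule sum_mono)
    fix i assume "i \<in> {..<n}"
    then have i: "i < n" by simp
    have "measure M (A1 i \<union> A2 i) \<le> measure M (A1 i) + measure M (A2 i)"
      by (rule measure_Un_le) (use A1s[OF i] A2s[OF i] in auto)
    also have "\<dots> \<le> 4 / (real n)^2" using mA1[OF i] mA2[OF i] by simp
    finally show "measure M (A1 i \<union> A2 i) \<le> 4 / (real n)^2" .
  qed
  also have "\<dots> = 4 / real n" using n0 by (simp add: power2_eq_square)
  finally show ?thesis unfolding B_def .
qed



theorem mainTheorem7:
  fixes n T :: "nat \<Rightarrow> nat"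
    and Zs :: "nat \<Rightarrow> nat \<Rightarrow> nat \<Rightarrow> real"
    and \<Omega> :: "nat \<Rightarrow> 'a measure"
    and Nz :: "nat \<Rightarrow> 'a \<Rightarrow> nat \<Rightarrow> nat \<Rightarrow> real"
    and nu :: "nat \<Rightarrow> nat \<Rightarrow> real"
  assumes n_inf: "filterlim n at_top sequentially"
    and T_inf: "filterlim T at_top sequentially"
    and prob: "\<And>k. prob_space (\<Omega> k)"
    and sig_pos: "\<And>k i. i < n k \<Longrightarrow> sig_power (T k) (Zs k i) > 0"
    and nu_pos: "\<And>k i. i < n k \<Longrightarrow> nu k i > 0"
    and indep: "\<And>k. prob_space.indep_vars (\<Omega> k)
                  (\<lambda>_. PiM {..<T k} (\<lambda>_. borel))
                  (\<lambda>i \<omega>. restrict (\<lambda>t. Nz k \<omega> i t) {..<T k}) {..<n k}"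
    and mean_zero: "\<And>k i t. i < n k \<Longrightarrow> t < T k \<Longrightarrow>
                  integrable (\<Omega> k) (\<lambda>\<omega>. Nz k \<omega> i t) \<and>
                  (\<integral>\<omega>. Nz k \<omega> i t \<partial>\<Omega> k) = 0"
    and subg: "\<And>k i. i < n k \<Longrightarrow>
                  subgaussian_vec (\<Omega> k) (T k) (\<lambda>\<omega>. Nz k \<omega> i) (nu k i)"
    and n_O_T: "(\<lambda>k. real (n k)) \<in> O(\<lambda>k. real (T k))"
    and lam_bdd: "\<exists>c>0. \<forall>\<^sub>F k in sequentially. lam_min_nz (corr_mat (n k) (T k) (Zs k)) \<ge> c"
    and kappa_o_T: "(\<lambda>k. cond_number (corr_mat (n k) (T k) (Zs k))) \<in> o(\<lambda>k. real (T k))"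
    and kappa_gamma: "(\<lambda>k. cond_number (corr_mat (n k) (T k) (Zs k)) * ln (real (T k))
                          / snr_gamma (n k) (T k) (Zs k) (nu k)) \<longlonglongrightarrow> 0"
  shows "\<forall>\<epsilon>>0. \<exists>C. \<forall>\<^sub>F k in sequentially.
           prob_space.prob (\<Omega> k)
             {\<omega> \<in> space (\<Omega> k). \<exists>i<n k. \<exists>j<n k.
                \<bar>sqrt (sig_power (T k) (Zs k i)) * sqrt (sig_power (T k) (Zs k j))
                  / (sqrt (sig_power (T k) (\<lambda>t. Zs k i t + Nz k \<omega> i t))
                     * sqrt (sig_power (T k) (\<lambda>t. Zs k j t + Nz k \<omega> j t))) - 1\<bar>
                > C * (ln (real (n k)) / snr_gamma (n k) (T k) (Zs k) (nu k)
                       + sqrt (ln (real (n k)) / (real (T k) * snr_gamma (n k) (T k) (Zs k) (nu k)))) }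
           \<le> \<epsilon>"
proof -
  define L where "L = (\<lambda>k. ln (real (n k)))"
  define g where "g = (\<lambda>k. snr_gamma (n k) (T k) (Zs k) (nu k))"
  define kap where "kap = (\<lambda>k. cond_number (corr_mat (n k) (T k) (Zs k)))"
  define r where "r = (\<lambda>k. L k / g k + sqrt (L k / (real (T k) * g k)))"
  have evT: "\<forall>\<^sub>F k in sequentially. T k \<ge> 1"
    using T_inf unfolding filterlim_at_top by blast
  have evn: "\<forall>\<^sub>F k in sequentially. n k \<ge> 3"
    using n_inf unfolding filterlim_at_top by blast
  obtain c where c: "c > 0" and evc: "\<forall>\<^sub>F k in sequentially. lam_min_nz (corr_mat (n k) (T k) (Zs k)) \<ge> c"
    using lam_bdd by blast
  have evkap: "\<forall>\<^sub>F k in sequentially. kap k \<ge> 1"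
    using evT evn evc
  proof eventually_elim
    case (elim k)
    show ?case unfolding kap_def
      by (rule cond_ge_1) (use elim c sig_pos in auto)
  qed
  obtain c' where c': "c' > 0" and evc': "\<forall>\<^sub>F k in sequentially. norm (real (n k)) \<le> c' * norm (real (T k))"
    using n_O_T by (rule landau_o.bigE)
  have lnT: "filterlim (\<lambda>k. ln (real (T k))) at_top sequentially"
    by (rule filterlim_compose[OF ln_at_top filterlim_compose[OF filterlim_real_sequentially T_inf]])
  have evlnT: "\<forall>\<^sub>F k in sequentially. ln (real (T k)) \<ge> max \<bar>ln c'\<bar> 1"
    using lnT unfolding filterlim_at_top by blast
  have g0: "\<And>k. n k > 0 \<Longrightarrow> g k > 0"
  proof -
    fix k assume nk: "n k > 0"
    have fin: "finite ((\<lambda>i. sig_power (T k) (Zs k i) / nu k i) ` {..<n k})" by simp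
    have ne: "(\<lambda>i. sig_power (T k) (Zs k i) / nu k i) ` {..<n k} \<noteq> {}" using nk by (auto simp: lessThan_empty_iff)
    show "g k > 0" unfolding g_def snr_gamma_def
      using Min_gr_iff[OF fin ne] sig_pos nu_pos by auto
  qed
  have evLg: "\<forall>\<^sub>F k in sequentially. norm (L k / g k) \<le> 2 * (kap k * ln (real (T k)) / g k)"
    using evT evn evkap evc' evlnT
  proof eventually_elim
    case (elim k)
    have gk: "g k > 0" using g0 elim by simp
    have nk: "real (n k) > 0" using elim by simp
    have Tk: "real (T k) > 0" using elim by simp
    have L0: "L k \<ge> 0" unfolding L_def using elim by simp
    have "L k \<le> ln (c' * real (T k))"
      unfolding L_def using elim nk c' Tk by (subst ln_le_cancel_iff) auto
    also have "\<dots> = ln c' + ln (real (T k))" using c' Tk by (simp add: ln_mult)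
    also have "\<dots> \<le> 2 * ln (real (T k))" using elim by linarith
    also have "\<dots> \<le> 2 * (kap k * ln (real (T k)))"
    proof -
      have "1 * ln (real (T k)) \<le> kap k * ln (real (T k))" using elim by (intro mult_right_mono) auto
      then show ?thesis by simp
    qed
    finally have "L k \<le> 2 * (kap k * ln (real (T k)))" .
    then have "L k / g k \<le> 2 * (kap k * ln (real (T k))) / g k" using gk by (intro divide_right_mono) auto
    then show ?case using L0 gk by simp
  qed
  have kg0: "(\<lambda>k. 2 * (kap k * ln (real (T k)) / g k)) \<longlonglongrightarrow> 0"
    using tendsto_mult_right_zero[OF kappa_gamma, of 2] unfolding kap_def g_def by (simp add: mult.commute)
  have Lg0: "(\<lambda>k. L k / g k) \<longlonglongrightarrow> 0"
    by (rule Lim_null_comparison[OF evLg kg0])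
  have evr: "\<forall>\<^sub>F k in sequentially. norm (r k) \<le> L k / g k + sqrt (L k / g k)"
    using evT evn
  proof eventually_elim
    case (elim k)
    have gk: "g k > 0" using g0 elim by simp
    have Tk: "real (T k) \<ge> 1" using elim by simp
    have L0: "L k \<ge> 0" unfolding L_def using elim by simp
    have a0: "L k / g k \<ge> 0" using L0 gk by simp
    have "L k / (real (T k) * g k) \<le> L k / g k"
    proof -
      have "L k / (real (T k) * g k) = (L k / g k) / real (T k)" by simp
      also have "\<dots> \<le> (L k / g k) / 1" by (rule divide_left_mono) (use a0 Tk in auto)
      finally show ?thesis by simp
    qed
    then have "sqrt (L k / (real (T k) * g k)) \<le> sqrt (L k / g k)" by simp
    moreover have "L k / (real (T k) * g k) \<ge> 0" using L0 gk Tk by simp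
    ultimately show ?case unfolding r_def using a0 by simp
  qed
  have r0: "r \<longlonglongrightarrow> 0"
  proof (rule Lim_null_comparison[OF evr])
    have "(\<lambda>k. sqrt (L k / g k)) \<longlonglongrightarrow> sqrt 0" by (rule tendsto_real_sqrt[OF Lg0])
    then show "(\<lambda>k. L k / g k + sqrt (L k / g k)) \<longlonglongrightarrow> 0" using tendsto_add[OF Lg0] by fastforce
  qed
  have evsmall: "\<forall>\<^sub>F k in sequentially. 4 * exp 3 * r k \<le> 1/2"
  proof -
    have "(0::real) < 1 / (8 * exp 3)" by simp
    from order_tendstoD(2)[OF r0 this] show ?thesis
    proof eventually_elim
      case (elim k)
      have "4 * exp 3 * r k \<le> 4 * exp 3 * (1 / (8 * exp 3))"
        using elim by (intro mult_left_mono) auto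
      also have "\<dots> = 1/2" by simp
      finally show ?case .
    qed
  qed
  show ?thesis
  proof (intro allI impI)
    fix \<epsilon> :: real assume e: "\<epsilon> > 0"
    have evne: "\<forall>\<^sub>F k in sequentially. n k \<ge> nat \<lceil>4 / \<epsilon>\<rceil>"
      using n_inf unfolding filterlim_at_top by blast
    show "\<exists>C. \<forall>\<^sub>F k in sequentially.
           prob_space.prob (\<Omega> k)
             {\<omega> \<in> space (\<Omega> k). \<exists>i<n k. \<exists>j<n k.
                \<bar>sqrt (sig_power (T k) (Zs k i)) * sqrt (sig_power (T k) (Zs k j))
                  / (sqrt (sig_power (T k) (\<lambda>t. Zs k i t + Nz k \<omega> i t))
                     * sqrt (sig_power (T k) (\<lambda>t. Zs k j t + Nz k \<omega> j t))) - 1\<bar>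
                > C * (ln (real (n k)) / snr_gamma (n k) (T k) (Zs k) (nu k)
                       + sqrt (ln (real (n k)) / (real (T k) * snr_gamma (n k) (T k) (Zs k) (nu k)))) }
           \<le> \<epsilon>"
    proof (intro exI[of _ "8 * exp 3"])
      show "\<forall>\<^sub>F k in sequentially.
           prob_space.prob (\<Omega> k)
             {\<omega> \<in> space (\<Omega> k). \<exists>i<n k. \<exists>j<n k.
                \<bar>sqrt (sig_power (T k) (Zs k i)) * sqrt (sig_power (T k) (Zs k j))
                  / (sqrt (sig_power (T k) (\<lambda>t. Zs k i t + Nz k \<omega> i t))
                     * sqrt (sig_power (T k) (\<lambda>t. Zs k j t + Nz k \<omega> j t))) - 1\<bar>
                > (8 * exp 3) * (ln (real (n k)) / snr_gamma (n k) (T k) (Zs k) (nu k)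
                       + sqrt (ln (real (n k)) / (real (T k) * snr_gamma (n k) (T k) (Zs k) (nu k)))) }
           \<le> \<epsilon>"
        using evT evn evsmall evne
      proof eventually_elim
        case (elim k)
        have sm: "4 * exp 3 * (ln (real (n k)) / snr_gamma (n k) (T k) (Zs k) (nu k)
                 + sqrt (ln (real (n k)) / (real (T k) * snr_gamma (n k) (T k) (Zs k) (nu k)))) \<le> 1/2"
          using elim(3) unfolding r_def L_def g_def .
        have "prob_space.prob (\<Omega> k)
             {\<omega> \<in> space (\<Omega> k). \<exists>i<n k. \<exists>j<n k.
                \<bar>sqrt (sig_power (T k) (Zs k i)) * sqrt (sig_power (T k) (Zs k j))
                  / (sqrt (sig_power (T k) (\<lambda>t. Zs k i t + Nz k \<omega> i t))
                     * sqrt (sig_power (T k) (\<lambda>t. Zs k j t + Nz k \<omega> j t))) - 1\<bar>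
                > (8 * exp 3) * (ln (real (n k)) / snr_gamma (n k) (T k) (Zs k) (nu k)
                       + sqrt (ln (real (n k)) / (real (T k) * snr_gamma (n k) (T k) (Zs k) (nu k)))) }
           \<le> 4 / real (n k)"
          by (rule main_k[OF prob _ _ sig_pos nu_pos subg sm]) (use elim in auto)
        also have "\<dots> \<le> \<epsilon>"
        proof -
          have "4 / \<epsilon> \<le> real (n k)" using elim(4) by linarith
          then have "4 \<le> real (n k) * \<epsilon>" using e by (simp add: divide_le_eq)
          moreover have "real (n k) > 0" using elim(2) by simp
          ultimately show ?thesis by (simp add: divide_le_eq mult.commute)
        qed
        finally show ?case .
      qed
    qed
  qed
qed


end
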